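(* Let $A=K[X_1,\ldots,X_n]$ be a polynomial ring over a field $K$, let $I\subseteq A$ be a homogeneous ideal, let $\prec$ be a monomial order on $A$, and let $G$ be the reduced Gr\"obner basis of $I$ with respect to $\prec$. Then $\operatorname{supp}(G)\subseteq \operatorname{cs}(I)$; that is, for every $f\in G$, the set $\operatorname{supp}(f)$ is a minimal element (with respect to inclusion) of $\{\operatorname{supp}(h) : h\in I,\ h\neq 0\}$.
   Context: For a nonzero polynomial $f\in A$, $\operatorname{supp}(f)$ denotes the set of monomials appearing in $f$ with nonzero coefficient. For a subset $S\subseteq A$, $\operatorname{supp}(S)$ is the set $\{\operatorname{supp}(f): f\in S,\ f\neq 0\}$. The circuits set $\operatorname{cs}(S)$ of a subset $S\subseteq A$ is the set of all minimal (with respect to inclusion) elements of $\operatorname{supp}(S)$. The reduced Gr\"obner basis of $I$ with respect to $\prec$ is the unique Gr\"obner basis $\{f_1,\dots,f_r\}$ of $I$ whose elements are monic with respect to $\prec$ and such that the leading monomial of $f_i$ divides no monomial of $\operatorname{supp}(f_j)$ for $i\neq j$. *)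

theory Defs
  imports Main "HOL-Library.Poly_Mapping"
begin

text \<open>Multivariate polynomials over a field 'k in the variables of a finite type 'v:
  a monomial is a finitely supported exponent vector, a polynomial is a finitely supported
  map from monomials to coefficients, with the convolution product of Poly_Mapping.\<close>

type_synonym ('v, 'k) mpoly = "('v \<Rightarrow>\<^sub>0 nat) \<Rightarrow>\<^sub>0 'k"

definition supp :: "('v, 'k::zero) mpoly \<Rightarrow> ('v \<Rightarrow>\<^sub>0 nat) set" where
  "supp f = Poly_Mapping.keys f"

definition supp_set :: "('v, 'k::zero) mpoly set \<Rightarrow> ('v \<Rightarrow>\<^sub>0 nat) set set" where
  "supp_set S = {supp f | f. f \<in> S \<and> f \<noteq> 0}"

definition cs :: "('v, 'k::zero) mpoly set \<Rightarrow> ('v \<Rightarrow>\<^sub>0 nat) set set" where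
  "cs S = {T \<in> supp_set S. \<forall>T' \<in> supp_set S. T' \<subseteq> T \<longrightarrow> T' = T}"

definition is_ideal :: "'a::comm_ring_1 set \<Rightarrow> bool" where
  "is_ideal I \<longleftrightarrow> 0 \<in> I \<and> (\<forall>f\<in>I. \<forall>g\<in>I. f + g \<in> I) \<and> (\<forall>f\<in>I. \<forall>h. h * f \<in> I)"

definition ideal_gen :: "'a::comm_ring_1 set \<Rightarrow> 'a set" where
  "ideal_gen S = \<Inter>{J. is_ideal J \<and> S \<subseteq> J}"

definition mdeg :: "('v \<Rightarrow>\<^sub>0 nat) \<Rightarrow> nat" where
  "mdeg m = sum (Poly_Mapping.lookup m) (Poly_Mapping.keys m)"

definition homogeneous :: "('v, 'k::zero) mpoly \<Rightarrow> bool" where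
  "homogeneous f \<longleftrightarrow> (\<exists>d. \<forall>m \<in> Poly_Mapping.keys f. mdeg m = d)"

definition homogeneous_ideal :: "('v, 'k::comm_ring_1) mpoly set \<Rightarrow> bool" where
  "homogeneous_ideal I \<longleftrightarrow> is_ideal I \<and> (\<exists>S. (\<forall>s\<in>S. homogeneous s) \<and> I = ideal_gen S)"

definition monomial_order :: "(('v \<Rightarrow>\<^sub>0 nat) \<Rightarrow> ('v \<Rightarrow>\<^sub>0 nat) \<Rightarrow> bool) \<Rightarrow> bool" where
  "monomial_order lt \<longleftrightarrow>
     (\<forall>a. \<not> lt a a) \<and>
     (\<forall>a b c. lt a b \<longrightarrow> lt b c \<longrightarrow> lt a c) \<and>
     (\<forall>a b. a \<noteq> b \<longrightarrow> lt a b \<or> lt b a) \<and>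
     wf {(a, b). lt a b} \<and>
     (\<forall>a b c. lt a b \<longrightarrow> lt (a + c) (b + c))"

definition lm :: "(('v \<Rightarrow>\<^sub>0 nat) \<Rightarrow> ('v \<Rightarrow>\<^sub>0 nat) \<Rightarrow> bool) \<Rightarrow> ('v, 'k::zero) mpoly \<Rightarrow> ('v \<Rightarrow>\<^sub>0 nat)" where
  "lm lt f = (THE m. m \<in> Poly_Mapping.keys f \<and> (\<forall>m' \<in> Poly_Mapping.keys f. m' = m \<or> lt m' m))"

definition mdvd :: "('v \<Rightarrow>\<^sub>0 nat) \<Rightarrow> ('v \<Rightarrow>\<^sub>0 nat) \<Rightarrow> bool" where
  "mdvd m m' \<longleftrightarrow> (\<exists>c. m' = m + c)"

definition groebner_basis ::
  "(('v \<Rightarrow>\<^sub>0 nat) \<Rightarrow> ('v \<Rightarrow>\<^sub>0 nat) \<Rightarrow> bool) \<Rightarrow> ('v, 'k::field) mpoly set \<Rightarrow> ('v, 'k) mpoly set \<Rightarrow> bool" where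
  "groebner_basis lt I G \<longleftrightarrow> finite G \<and> G \<subseteq> I \<and> 0 \<notin> G \<and>
     (\<forall>f \<in> I. f \<noteq> 0 \<longrightarrow> (\<exists>g \<in> G. mdvd (lm lt g) (lm lt f)))"

definition reduced_groebner_basis ::
  "(('v \<Rightarrow>\<^sub>0 nat) \<Rightarrow> ('v \<Rightarrow>\<^sub>0 nat) \<Rightarrow> bool) \<Rightarrow> ('v, 'k::field) mpoly set \<Rightarrow> ('v, 'k) mpoly set \<Rightarrow> bool" where
  "reduced_groebner_basis lt I G \<longleftrightarrow> groebner_basis lt I G \<and>
     (\<forall>g \<in> G. Poly_Mapping.lookup g (lm lt g) = 1) \<and>
     (\<forall>g \<in> G. \<forall>g' \<in> G. g \<noteq> g' \<longrightarrow> (\<forall>m \<in> supp g'. \<not> mdvd (lm lt g) m))"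

end

theory Submission
  imports Defs
begin

lemma lookup_scale:
  fixes g :: "('v \<Rightarrow>\<^sub>0 nat) \<Rightarrow>\<^sub>0 'k::field"
  shows "Poly_Mapping.lookup (Poly_Mapping.single 0 a * g) m = a * Poly_Mapping.lookup g m"
  unfolding mult_map_scale_conv_mult[symmetric]
  by (simp add: Poly_Mapping.map.rep_eq when_def)

lemma mo_facts:
  assumes "monomial_order lt"
  shows "\<And>a. \<not> lt a a" "\<And>a b c. lt a b \<Longrightarrow> lt b c \<Longrightarrow> lt a c"
    "\<And>a b. a \<noteq> b \<Longrightarrow> lt a b \<or> lt b a" "wf {(a, b). lt a b}"
    "\<And>a b c. lt a b \<Longrightarrow> lt (a + c) (b + c)"
  using assms unfolding monomial_order_def by simp_all

lemma max_exists:
  assumes mo: "monomial_order lt" and fin: "finite S" and ne: "S \<noteq> {}"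
  shows "\<exists>m\<in>S. \<forall>m'\<in>S. m' = m \<or> lt m' m"
  using fin ne
proof (induction S rule: finite_ne_induct)
  case (singleton x) then show ?case by simp
next
  case (insert x F)
  then obtain m where m: "m \<in> F" "\<forall>m'\<in>F. m' = m \<or> lt m' m" by blast
  show ?case
  proof (cases "lt x m")
    case True then show ?thesis using m by auto
  next
    case False
    then have "x = m \<or> lt m x" using mo_facts(3)[OF mo, of x m] by blast
    then show ?thesis
    proof
      assume "x = m" then show ?thesis using m by auto
    next
      assume xm: "lt m x"
      have "\<forall>m'\<in>insert x F. m' = x \<or> lt m' x"
      proof
        fix m' assume "m' \<in> insert x F"
        then have "m' = x \<or> m' = m \<or> lt m' m" using m by blast
        then show "m' = x \<or> lt m' x" using xm mo_facts(2)[OF mo, of m' m x] by blast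
      qed
      then show ?thesis by blast
    qed
  qed
qed

lemma lm_props:
  assumes mo: "monomial_order lt" and f: "f \<noteq> 0"
  shows "lm lt f \<in> Poly_Mapping.keys f \<and> (\<forall>m'\<in>Poly_Mapping.keys f. m' = lm lt f \<or> lt m' (lm lt f))"
proof -
  have "Poly_Mapping.keys f \<noteq> {}" using f by simp
  then obtain m where m: "m \<in> Poly_Mapping.keys f" "\<forall>m'\<in>Poly_Mapping.keys f. m' = m \<or> lt m' m"
    using max_exists[OF mo finite_keys \<open>Poly_Mapping.keys f \<noteq> {}\<close>] by blast
  note irr = mo_facts(1)[OF mo] and tr = mo_facts(2)[OF mo]
  have "lm lt f = m"
    unfolding lm_def
  proof (rule the_equality)
    show "m \<in> Poly_Mapping.keys f \<and> (\<forall>m'\<in>Poly_Mapping.keys f. m' = m \<or> lt m' m)" using m by blast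
  next
    fix n assume n: "n \<in> Poly_Mapping.keys f \<and> (\<forall>m'\<in>Poly_Mapping.keys f. m' = n \<or> lt m' n)"
    have "m = n \<or> lt m n" using n m(1) by blast
    moreover have "n = m \<or> lt n m" using m(2) n by blast
    ultimately show "n = m" using irr tr by blast
  qed
  then show ?thesis using m by simp
qed

lemma not_lt_zero:
  assumes mo: "monomial_order lt"
  shows "\<not> lt (c::'v \<Rightarrow>\<^sub>0 nat) 0"
proof
  assume c: "lt c 0"
  have add: "\<And>a b d. lt a b \<Longrightarrow> lt (a + d) (b + d)" and wf: "wf {(a, b). lt a b}"
    using mo_facts[OF mo] by blast+
  define f where "f i = (((+) c) ^^ i) 0" for i
  have "\<forall>i. (f (Suc i), f i) \<in> {(a, b). lt a b}"
  proof
    fix i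
    have "lt (c + f i) (0 + f i)" using add[OF c] .
    then show "(f (Suc i), f i) \<in> {(a, b). lt a b}" by (simp add: f_def)
  qed
  then show False using wf by (auto simp: wf_iff_no_infinite_down_chain)
qed

lemma dvd_not_lt:
  assumes mo: "monomial_order lt" and d: "mdvd a b"
  shows "\<not> lt b a"
proof
  assume bl: "lt b a"
  obtain c where c: "b = a + c" using d unfolding mdvd_def by blast
  have irr: "\<And>a. \<not> lt a a" and tr: "\<And>a b c. lt a b \<Longrightarrow> lt b c \<Longrightarrow> lt a c"
    and tot: "\<And>a b. a \<noteq> b \<Longrightarrow> lt a b \<or> lt b a"
    and add: "\<And>a b d. lt a b \<Longrightarrow> lt (a + d) (b + d)"
    using mo_facts[OF mo] by blast+
  have "\<not> lt c 0" using not_lt_zero[OF mo] .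
  moreover have "c \<noteq> 0" using bl c irr by auto
  ultimately have "lt 0 c" using tot by blast
  then have "lt (0 + a) (c + a)" by (rule add)
  then have "lt a b" using c by (simp add: add.commute)
  then show False using bl tr irr by blast
qed

theorem lemma2p2:
  fixes I G :: "('v::finite, 'k::field) mpoly set"
    and lt :: "('v \<Rightarrow>\<^sub>0 nat) \<Rightarrow> ('v \<Rightarrow>\<^sub>0 nat) \<Rightarrow> bool"
  assumes "homogeneous_ideal I"
    and mo: "monomial_order lt"
    and rg: "reduced_groebner_basis lt I G"
  shows "supp_set G \<subseteq> cs I"
proof
  fix T assume "T \<in> supp_set G"
  then obtain g where g: "g \<in> G" "g \<noteq> 0" "T = supp g" unfolding supp_set_def by blast
  have id: "is_ideal I" using assms(1) unfolding homogeneous_ideal_def by (rule conjunct1)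
  have gbG: "groebner_basis lt I G" using rg unfolding reduced_groebner_basis_def by (rule conjunct1)
  have GI: "G \<subseteq> I" using gbG unfolding groebner_basis_def by simp
  have gb: "\<And>f. f \<in> I \<Longrightarrow> f \<noteq> 0 \<Longrightarrow> \<exists>g\<in>G. mdvd (lm lt g) (lm lt f)"
    using gbG unfolding groebner_basis_def by simp
  have monic: "\<And>g. g \<in> G \<Longrightarrow> Poly_Mapping.lookup g (lm lt g) = 1"
    using rg unfolding reduced_groebner_basis_def by simp
  have red: "\<And>g g' m. g \<in> G \<Longrightarrow> g' \<in> G \<Longrightarrow> g \<noteq> g' \<Longrightarrow> m \<in> supp g' \<Longrightarrow> \<not> mdvd (lm lt g) m"
    using rg unfolding reduced_groebner_basis_def by simp
  have gI: "g \<in> I" using g GI by blast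
  have lmg: "lm lt g \<in> Poly_Mapping.keys g"
    "\<forall>m'\<in>Poly_Mapping.keys g. m' = lm lt g \<or> lt m' (lm lt g)"
    using lm_props[OF mo g(2)] by blast+
  have key: "lm lt h = lm lt g" if h: "h \<in> I" "h \<noteq> 0" "supp h \<subseteq> supp g" for h
  proof -
    have lh: "lm lt h \<in> supp g" using lm_props[OF mo h(2)] h(3) unfolding supp_def by blast
    obtain g' where g': "g' \<in> G" "mdvd (lm lt g') (lm lt h)" using gb h by blast
    have "g' = g"
    proof (rule ccontr)
      assume "g' \<noteq> g"
      from red[OF g'(1) g(1) this lh] g'(2) show False by simp
    qed
    then have "\<not> lt (lm lt h) (lm lt g)" using dvd_not_lt[OF mo] g'(2) by blast
    then show ?thesis using lmg lh unfolding supp_def by blast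
  qed
  have "T \<in> supp_set I" using g gI unfolding supp_set_def by blast
  moreover have "\<forall>T' \<in> supp_set I. T' \<subseteq> T \<longrightarrow> T' = T"
  proof (intro ballI impI)
    fix T' assume "T' \<in> supp_set I" "T' \<subseteq> T"
    then obtain h where h0: "h \<in> I" "h \<noteq> 0" "T' = supp h"
      unfolding supp_set_def by blast
    have h: "h \<in> I" "h \<noteq> 0" "T' = supp h" "supp h \<subseteq> supp g"
      using h0 \<open>T' \<subseteq> T\<close> g(3) by auto
    have lh: "lm lt h = lm lt g" using key h by blast
    define a where "a = Poly_Mapping.lookup h (lm lt g)"
    have a0: "a \<noteq> 0" using lm_props[OF mo h(2)] lh unfolding a_def by (simp add: in_keys_iff)
    define h' where "h' = h + Poly_Mapping.single 0 (- a) * g"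
    have idm: "\<And>f q. f \<in> I \<Longrightarrow> q * f \<in> I" and ida: "\<And>f q. f \<in> I \<Longrightarrow> q \<in> I \<Longrightarrow> f + q \<in> I"
      using id unfolding is_ideal_def by simp_all
    have h'I: "h' \<in> I" unfolding h'_def by (rule ida[OF h(1) idm[OF gI]])
    have lk: "Poly_Mapping.lookup h' m = Poly_Mapping.lookup h m - a * Poly_Mapping.lookup g m" for m
      unfolding h'_def by (simp add: lookup_add lookup_scale)
    have sub: "supp h' \<subseteq> supp g"
    proof
      fix m assume "m \<in> supp h'"
      then have "Poly_Mapping.lookup h' m \<noteq> 0" unfolding supp_def by (simp add: in_keys_iff)
      then have "Poly_Mapping.lookup h m \<noteq> 0 \<or> Poly_Mapping.lookup g m \<noteq> 0" using lk by auto
      then show "m \<in> supp g" using h(4) unfolding supp_def by (auto simp: in_keys_iff)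
    qed
    have "lm lt g \<notin> supp h'" unfolding supp_def
      by (simp add: in_keys_iff lk monic[OF g(1)] a_def)
    have "h' = 0"
    proof (rule ccontr)
      assume nz: "h' \<noteq> 0"
      have "lm lt h' = lm lt g" using key[OF h'I nz sub] .
      moreover have "lm lt h' \<in> supp h'" using lm_props[OF mo nz] unfolding supp_def by blast
      ultimately show False using \<open>lm lt g \<notin> supp h'\<close> by simp
    qed
    then have "\<forall>m. Poly_Mapping.lookup h m = a * Poly_Mapping.lookup g m"
      using lk by (metis eq_iff_diff_eq_0 lookup_zero)
    then have "supp h = supp g" unfolding supp_def using a0 by (auto simp: in_keys_iff)
    then show "T' = T" using h g by simp
  qed
  ultimately show "T \<in> cs I" unfolding cs_def by blast
qed

end
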